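(* Consider a two-player perfect-information game of depth $D$, together with approximate bounds $V^{\mathrm{grim}},V^{\mathrm{alt}}$ satisfying $V^{\mathrm{alt}}(s)\ge V^{\mathrm{grim}}(s)$ for all $s$, and approximate learned EPFs $\{\tilde U_s\}$ with induced strategy $\tilde\pi$, all as in the context. Suppose $L_\infty(\tilde U_s,\tilde U^{\mathrm{target}}_s)\le\epsilon$ for all $s\in\mathcal S$. Then $|R_1(\tilde\pi)-\widetilde{\mathsf{OPT}}_2|=\mathcal O(D\epsilon)$, where $\widetilde{\mathsf{OPT}}_2=\max_{\mu_2}\tilde U_{\mathrm{root}}(\mu_2)$. That is, the difference is at most $CD\epsilon$ for an absolute constant $C$.
   Context: A two-player perfect-information game is a finite rooted tree with states $\mathcal S$. Its leaves $\mathcal L$ carry payoffs $r_1(\ell),r_2(\ell)$ for the leader $\mathsf P_1$ and the follower $\mathsf P_2$. Non-leaf states are partitioned into leader states $\mathcal S_1$ and follower states $\mathcal S_2$, and $\mathcal C(s)$ denotes the children of $s$. The depth $D$ is the maximum number of edges on a root-to-leaf path. Approximate bounds: - Let $\tilde\pi_1^{\mathrm{grim}}$ be any fixed leader strategy (an approximate grim strategy). Let $V^{\mathrm{grim}}(s)$ be the follower's expected payoff from $s$ when the follower best responds to $\tilde\pi_1^{\mathrm{grim}}$ in the subgame rooted at $s$. - Let $\tilde\pi^{\mathrm{alt}}$ be any fixed joint strategy (an approximate joint altruistic strategy), and let $V^{\mathrm{alt}}(s)$ be the follower's expected payoff from $s$ under it. For leaves, both quantities equal $r_2(\ell)$. -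 For $s\in\mathcal S_2$ and $s'\in\mathcal C(s)$, let $\tilde\tau(s')=\max_{s^!\in\mathcal C(s),s^!\ne s'}V^{\mathrm{grim}}(s^!)$. Let $\tilde\beta(s')=\tilde\tau(s')$ if the parent of $s'$ is in $\mathcal S_2$, and $-\infty$ if it is in $\mathcal S_1$. Operators, for $g:\mathbb R\to\mathbb R\cup\{-\infty\}$: - $\bigwedge_i g_i$ is the upper concave envelope, the pointwise infimum of all concave $h\ge\max_i g_i$; - $[g\triangleright t](\mu)=g(\mu)$ if $\mu\ge t$ and $-\infty$ otherwise. Learned EPFs: for a leaf, $\tilde U_\ell(\mu)=r_1(\ell)$ if $\mu=r_2(\ell)$ and $-\infty$ otherwise. For each non-leaf $s$, $\tilde U_s$ is piecewise linear, the linear interpolation of finitely many points with $x$-coordinates in $[V^{\mathrm{grim}}(s),V^{\mathrm{alt}}(s)]$ including both endpoints. It is real-valued there and $-\infty$ outside. The target is $\tilde U^{\mathrm{target}}_s=\bigwedge_{s'\in\mathcal C(s)}(\tilde U_{s'}\triangleright\tilde\beta(s'))$ for non-leaf $s$, and $\tilde U_\ell$ for leaves. The loss is $L_\infty(f,g)=\sup_\mu|f(\mu)-g(\mu)|$, with $|(-\infty)-(-\infty)|=0$. Induced strategy $\tilde\pi$: start at the root with promise $\mu_{\mathrm{root}}\in\arg\max\tilde U_{\mathrm{root}}$. At a non-leaf $s$ with promise $\mu$, pick a maximizer $(s',s'',t,\mu',\mu'')$, over $s',s''\in\mathcal C(s)$, $t\in[0,1]$ with $t\mu'+(1-t)\mu''=\mu$,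 of $t[\tilde U_{s'}\triangleright\tilde\beta(s')](\mu')+(1-t)[\tilde U_{s''}\triangleright\tilde\beta(s'')](\mu'')$. Move to $s'$ with probability $t$ and promise $\mu'$, and to $s''$ with probability $1-t$ and promise $\mu''$. The follower follows recommendations at its states. $R_1(\tilde\pi)$ is the leader's resulting expected payoff. *)

theory Defs
  imports Complex_Main "HOL-Library.Extended_Real"
begin

definition edges :: "nat set \<Rightarrow> (nat \<Rightarrow> nat set) \<Rightarrow> (nat \<times> nat) set" where
  "edges S ch = {(s, c). s \<in> S \<and> c \<in> ch s}"

definition leaves :: "nat set \<Rightarrow> (nat \<Rightarrow> nat set) \<Rightarrow> nat set" where
  "leaves S ch = {s \<in> S. ch s = {}}"

definition game_tree :: "nat set \<Rightarrow> nat \<Rightarrow> (nat \<Rightarrow> nat set) \<Rightarrow> bool" where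
  "game_tree S rt ch \<longleftrightarrow>
     finite S \<and> rt \<in> S \<and> (\<forall>s\<in>S. ch s \<subseteq> S) \<and> (\<forall>s\<in>S. rt \<notin> ch s) \<and>
     (\<forall>c\<in>S - {rt}. \<exists>!p. p \<in> S \<and> c \<in> ch p) \<and>
     (\<forall>s\<in>S. (rt, s) \<in> (edges S ch)\<^sup>*)"

definition depth :: "nat set \<Rightarrow> nat \<Rightarrow> (nat \<Rightarrow> nat set) \<Rightarrow> nat" where
  "depth S rt ch = Max {n. \<exists>l\<in>leaves S ch. (rt, l) \<in> (edges S ch) ^^ n}"

definition behav :: "(nat \<Rightarrow> nat set) \<Rightarrow> nat set \<Rightarrow> (nat \<Rightarrow> nat \<Rightarrow> real) \<Rightarrow> bool" where
  "behav ch A \<pi> \<longleftrightarrow> (\<forall>s\<in>A. (\<forall>c\<in>ch s. 0 \<le> \<pi> s c) \<and> (\<Sum>c\<in>ch s. \<pi> s c) = 1)"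

definition concave_ext :: "(real \<Rightarrow> ereal) \<Rightarrow> bool" where
  "concave_ext h \<longleftrightarrow> (\<forall>x. h x \<noteq> \<infinity>) \<and>
     (\<forall>x y a b t. 0 \<le> t \<and> t \<le> 1 \<and> ereal a \<le> h x \<and> ereal b \<le> h y \<longrightarrow>
        ereal (t * a + (1 - t) * b) \<le> h (t * x + (1 - t) * y))"

definition uce :: "'i set \<Rightarrow> ('i \<Rightarrow> real \<Rightarrow> ereal) \<Rightarrow> real \<Rightarrow> ereal" where
  "uce I g \<mu> = (INF h \<in> {h. concave_ext h \<and> (\<forall>i\<in>I. \<forall>x. g i x \<le> h x)}. h \<mu>)"

definition thr :: "(real \<Rightarrow> ereal) \<Rightarrow> ereal \<Rightarrow> real \<Rightarrow> ereal" where
  "thr g t \<mu> = (if t \<le> ereal \<mu> then g \<mu> else -\<infinity>)"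

text \<open>Sup-distance, with |(-\<infinity>) - (-\<infinity>)| = 0.\<close>
definition Linf :: "(real \<Rightarrow> ereal) \<Rightarrow> (real \<Rightarrow> ereal) \<Rightarrow> ereal" where
  "Linf f g = (SUP \<mu>. if f \<mu> = g \<mu> then 0 else \<bar>f \<mu> - g \<mu>\<bar>)"

definition pl_interp :: "real \<Rightarrow> real \<Rightarrow> (real \<Rightarrow> real) \<Rightarrow> bool" where
  "pl_interp a b f \<longleftrightarrow> (\<exists>P. finite P \<and> a \<in> P \<and> b \<in> P \<and> P \<subseteq> {a..b} \<and>
     (\<forall>p\<in>P. \<forall>q\<in>P. p < q \<and> {p<..<q} \<inter> P = {} \<longrightarrow>
        (\<forall>x\<in>{p..q}. f x = f p + (x - p) / (q - p) * (f q - f p))))"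

text \<open>V^grim: follower's best-response value against the fixed leader strategy \<pi>g.\<close>
definition grim_value ::
  "nat set \<Rightarrow> (nat \<Rightarrow> nat set) \<Rightarrow> nat set \<Rightarrow> (nat \<Rightarrow> real) \<Rightarrow> (nat \<Rightarrow> nat \<Rightarrow> real)
     \<Rightarrow> (nat \<Rightarrow> real) \<Rightarrow> bool" where
  "grim_value S ch S1 r2 \<pi>g V \<longleftrightarrow>
     (\<forall>l\<in>leaves S ch. V l = r2 l) \<and>
     (\<forall>s\<in>S1. V s = (\<Sum>c\<in>ch s. \<pi>g s c * V c)) \<and>
     (\<forall>s\<in>S - leaves S ch - S1. V s = Max (V ` ch s))"

definition alt_value ::
  "nat set \<Rightarrow> (nat \<Rightarrow> nat set) \<Rightarrow> (nat \<Rightarrow> real) \<Rightarrow> (nat \<Rightarrow> nat \<Rightarrow> real)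
     \<Rightarrow> (nat \<Rightarrow> real) \<Rightarrow> bool" where
  "alt_value S ch r2 \<pi>a V \<longleftrightarrow>
     (\<forall>l\<in>leaves S ch. V l = r2 l) \<and>
     (\<forall>s\<in>S - leaves S ch. V s = (\<Sum>c\<in>ch s. \<pi>a s c * V c))"

definition beta :: "(nat \<Rightarrow> nat set) \<Rightarrow> nat set \<Rightarrow> (nat \<Rightarrow> real) \<Rightarrow> nat \<Rightarrow> nat \<Rightarrow> ereal" where
  "beta ch S2 Vg s s' = (if s \<in> S2 then Sup (ereal ` Vg ` (ch s - {s'})) else -\<infinity>)"

definition target ::
  "nat set \<Rightarrow> (nat \<Rightarrow> nat set) \<Rightarrow> nat set \<Rightarrow> (nat \<Rightarrow> real) \<Rightarrow> (nat \<Rightarrow> real \<Rightarrow> ereal)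
     \<Rightarrow> nat \<Rightarrow> real \<Rightarrow> ereal" where
  "target S ch S1 Vg U s =
     (if s \<in> leaves S ch then U s
      else uce (ch s) (\<lambda>s'. thr (U s') (beta ch (S - leaves S ch - S1) Vg s s')))"

definition learned_epfs ::
  "nat set \<Rightarrow> (nat \<Rightarrow> nat set) \<Rightarrow> (nat \<Rightarrow> real) \<Rightarrow> (nat \<Rightarrow> real) \<Rightarrow> (nat \<Rightarrow> real)
     \<Rightarrow> (nat \<Rightarrow> real) \<Rightarrow> (nat \<Rightarrow> real \<Rightarrow> ereal) \<Rightarrow> bool" where
  "learned_epfs S ch r1 r2 Vg Va U \<longleftrightarrow>
     (\<forall>l\<in>leaves S ch. \<forall>\<mu>. U l \<mu> = (if \<mu> = r2 l then ereal (r1 l) else -\<infinity>)) \<and>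
     (\<forall>s\<in>S - leaves S ch. \<exists>f. pl_interp (Vg s) (Va s) f \<and>
        (\<forall>\<mu>. U s \<mu> = (if \<mu> \<in> {Vg s..Va s} then ereal (f \<mu>) else -\<infinity>)))"

type_synonym choice = "nat \<times> nat \<times> real \<times> real \<times> real"

definition feasible :: "(nat \<Rightarrow> nat set) \<Rightarrow> nat \<Rightarrow> real \<Rightarrow> choice \<Rightarrow> bool" where
  "feasible ch s \<mu> x = (case x of (s', s'', t, \<mu>', \<mu>'') \<Rightarrow>
     s' \<in> ch s \<and> s'' \<in> ch s \<and> 0 \<le> t \<and> t \<le> 1 \<and> t * \<mu>' + (1 - t) * \<mu>'' = \<mu>)"

definition objective ::
  "(nat \<Rightarrow> nat \<Rightarrow> ereal) \<Rightarrow> (nat \<Rightarrow> real \<Rightarrow> ereal) \<Rightarrow> nat \<Rightarrow> choice \<Rightarrow> ereal" where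
  "objective bt U s x = (case x of (s', s'', t, \<mu>', \<mu>'') \<Rightarrow>
     ereal t * thr (U s') (bt s s') \<mu>' + ereal (1 - t) * thr (U s'') (bt s s'') \<mu>'')"

definition induced_selection ::
  "nat set \<Rightarrow> (nat \<Rightarrow> nat set) \<Rightarrow> (nat \<Rightarrow> nat \<Rightarrow> ereal) \<Rightarrow> (nat \<Rightarrow> real \<Rightarrow> ereal)
     \<Rightarrow> (nat \<Rightarrow> real \<Rightarrow> choice) \<Rightarrow> bool" where
  "induced_selection S ch bt U sel \<longleftrightarrow>
     (\<forall>s\<in>S - leaves S ch. \<forall>\<mu>. feasible ch s \<mu> (sel s \<mu>) \<and>
        (\<forall>x. feasible ch s \<mu> x \<longrightarrow> objective bt U s x \<le> objective bt U s (sel s \<mu>)))"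

text \<open>W s \<mu>: leader's expected payoff when play starts at s with promise \<mu> and
  follows the selection sel (follower obeys recommendations).\<close>
definition leader_payoff ::
  "nat set \<Rightarrow> (nat \<Rightarrow> nat set) \<Rightarrow> (nat \<Rightarrow> real) \<Rightarrow> (nat \<Rightarrow> real \<Rightarrow> choice)
     \<Rightarrow> (nat \<Rightarrow> real \<Rightarrow> real) \<Rightarrow> bool" where
  "leader_payoff S ch r1 sel W \<longleftrightarrow>
     (\<forall>l\<in>leaves S ch. \<forall>\<mu>. W l \<mu> = r1 l) \<and>
     (\<forall>s\<in>S - leaves S ch. \<forall>\<mu>. (case sel s \<mu> of (s', s'', t, \<mu>', \<mu>'') \<Rightarrow>
        W s \<mu> = t * W s' \<mu>' + (1 - t) * W s'' \<mu>''))"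


end

theory Submission
  imports Defs
begin


definition obj2 :: "(nat \<Rightarrow> real \<Rightarrow> ereal) \<Rightarrow> choice \<Rightarrow> ereal" where
  "obj2 g x = (case x of (a,b,t,p,q) \<Rightarrow> ereal t * g a p + ereal (1-t) * g b q)"

lemma objective_eq: "objective bt U s x = obj2 (\<lambda>c. thr (U c) (bt s c)) x"
  by (simp add: objective_def obj2_def split: prod.splits)

lemma obj2_real:
  assumes g: "\<forall>c\<in>K. \<forall>p. g c p \<noteq> \<infinity>" and "a\<in>K" "b\<in>K" "0\<le>t" "t\<le>1"
    and e: "obj2 g (a,b,t,p,q) = ereal \<tau>"
  shows "\<exists>v w. (t > 0 \<longrightarrow> g a p = ereal v) \<and> (t < 1 \<longrightarrow> g b q = ereal w) \<and> \<tau> = t*v + (1-t)*w"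
proof (cases "t = 0")
  case True
  then have "g b q = ereal \<tau>" using e by (simp add: obj2_def zero_ereal_def[symmetric])
  then show ?thesis using True by auto
next
  case f0: False
  show ?thesis
  proof (cases "t = 1")
    case True
    then have "g a p = ereal \<tau>" using e by (simp add: obj2_def zero_ereal_def[symmetric])
    then show ?thesis using True by auto
  next
    case False
    have t: "0 < t" "t < 1" using f0 False assms by auto
    have ga: "g a p \<noteq> \<infinity>" "g b q \<noteq> \<infinity>" using g assms by auto
    have "g a p \<noteq> -\<infinity>"
    proof
      assume h: "g a p = -\<infinity>"
      have "ereal t * g a p = -\<infinity>" using h t by simp
      then have "obj2 g (a,b,t,p,q) = -\<infinity>" using ga t by (simp add: obj2_def)
      then show False using e by simp
    qed
    moreover have "g b q \<noteq> -\<infinity>"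
    proof
      assume h: "g b q = -\<infinity>"
      have "ereal (1-t) * g b q = -\<infinity>" using h t by simp
      then have "obj2 g (a,b,t,p,q) = -\<infinity>" using ga t by (simp add: obj2_def)
      then show False using e by simp
    qed
    ultimately obtain v w where vw: "g a p = ereal v" "g b q = ereal w" using ga
      by (metis ereal_cases)
    then have "obj2 g (a,b,t,p,q) = ereal (t*v + (1-t)*w)" by (simp add: obj2_def)
    then show ?thesis using e vw by auto
  qed
qed

lemma obj2_clean:
  assumes g: "\<forall>c\<in>K. \<forall>p. g c p \<noteq> \<infinity>" and "a\<in>K" "b\<in>K" "0\<le>t" "t\<le>1"
    and e: "obj2 g (a,b,t,p,q) = ereal \<tau>" and mu: "t*p + (1-t)*q = \<mu>"
  shows "\<exists>a' b' l p' q' v w. a'\<in>K \<and> b'\<in>K \<and> 0\<le>l \<and> l\<le>1 \<and> g a' p' = ereal v \<and> g b' q' = ereal w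
     \<and> l*p' + (1-l)*q' = \<mu> \<and> l*v + (1-l)*w = \<tau>"
proof -
  obtain v w where vw: "(t > 0 \<longrightarrow> g a p = ereal v)" "(t < 1 \<longrightarrow> g b q = ereal w)" "\<tau> = t*v + (1-t)*w"
    using obj2_real[OF assms(1-6)] by blast
  consider "t = 0" | "t = 1" | "0 < t \<and> t < 1" using assms by linarith
  then show ?thesis
  proof cases
    case 1
    then show ?thesis using vw mu assms(3)
      by (rule_tac x=b in exI, rule_tac x=b in exI, rule_tac x=0 in exI, rule_tac x=q in exI,
          rule_tac x=q in exI, rule_tac x=w in exI, rule_tac x=w in exI) auto
  next
    case 2
    then show ?thesis using vw mu assms(2)
      by (rule_tac x=a in exI, rule_tac x=a in exI, rule_tac x=1 in exI, rule_tac x=p in exI,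
          rule_tac x=p in exI, rule_tac x=v in exI, rule_tac x=v in exI) auto
  next
    case 3
    then show ?thesis using vw mu assms(2-5) by blast
  qed
qed

lemma obj2_val: "g a p = ereal v \<Longrightarrow> g b q = ereal w \<Longrightarrow> obj2 g (a,b,l,p,q) = ereal (l*v + (1-l)*w)"
  by (simp add: obj2_def)

lemma obj2_not_inf:
  assumes g: "\<forall>c\<in>K. \<forall>p. g c p \<noteq> \<infinity>" and "a\<in>K" "b\<in>K" "0\<le>t" "t\<le>1"
  shows "obj2 g (a,b,t,p,q) \<noteq> \<infinity>"
proof -
  have "ereal t * g a p \<noteq> \<infinity>" using g assms by (cases "g a p") (auto simp: ereal_mult_eq_PInfty)
  moreover have "ereal (1-t) * g b q \<noteq> \<infinity>" using g assms by (cases "g b q") (auto simp: ereal_mult_eq_PInfty)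
  ultimately show ?thesis by (simp add: obj2_def)
qed

lemma sep:
  fixes A B :: "real set"
  assumes "finite A" "finite B" "\<forall>a\<in>A. \<forall>b\<in>B. a \<le> b"
  shows "\<exists>\<sigma>. (\<forall>a\<in>A. a \<le> \<sigma>) \<and> (\<forall>b\<in>B. \<sigma> \<le> b)"
proof (cases "A = {}")
  case True
  show ?thesis
  proof (cases "B = {}")
    case True with \<open>A = {}\<close> show ?thesis by auto
  next
    case False
    then show ?thesis using True assms by (rule_tac x="Min B" in exI) auto
  qed
next
  case False
  then show ?thesis using assms by (rule_tac x="Max A" in exI) (auto intro: Max_in)
qed

lemma support:
  fixes Q :: "(real \<times> real) set"
  assumes fin: "finite Q"
    and pair: "\<forall>(p,v)\<in>Q. \<forall>(q,w)\<in>Q. \<forall>l. 0 \<le> l \<and> l \<le> 1 \<and> l*p + (1-l)*q = z \<longrightarrow> l*v + (1-l)*w \<le> m"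
  shows "\<exists>\<sigma>. \<forall>(p,v)\<in>Q. v \<le> m + \<sigma>*(p - z)"
proof -
  define A where "A = (\<lambda>(q,w). (w - m)/(q - z)) ` {(q,w)\<in>Q. q > z}"
  define B where "B = (\<lambda>(p,v). (m - v)/(z - p)) ` {(p,v)\<in>Q. p < z}"
  have AB: "\<forall>a\<in>A. \<forall>b\<in>B. a \<le> b"
  proof (intro ballI)
    fix a b assume "a \<in> A" "b \<in> B"
    then obtain q w p v where qw: "(q,w)\<in>Q" "q > z" "a = (w - m)/(q - z)"
      and pv: "(p,v)\<in>Q" "p < z" "b = (m - v)/(z - p)" unfolding A_def B_def by auto
    define l where "l = (q - z)/(q - p)"
    have l01: "0 \<le> l" "l \<le> 1" using qw pv by (auto simp: l_def divide_simps)
    have "q - p > 0" using qw(2) pv(2) by simp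
    then have "l*(q-p) = q - z" unfolding l_def by simp
    moreover have "l*p + (1-l)*q = q - l*(q-p)" by (simp add: algebra_simps)
    ultimately have "l*p + (1-l)*q = z" by simp
    moreover have "\<forall>l. 0 \<le> l \<and> l \<le> 1 \<and> l*p + (1-l)*q = z \<longrightarrow> l*v + (1-l)*w \<le> m"
        using pair qw(1) pv(1) by blast
    ultimately have "l*v + (1-l)*w \<le> m" using l01 by blast
    moreover have "1 - l = (z-p)/(q-p)" using \<open>q - p > 0\<close> unfolding l_def by (simp add: field_simps)
    ultimately have "(q-z)/(q-p)*v + (z-p)/(q-p)*w \<le> m" unfolding l_def by simp
    then have "((q-z)*v + (z-p)*w)/(q-p) \<le> m" by (simp add: add_divide_distrib)
    then have "(q - z)*v + (z - p)*w \<le> m*(q-p)" using \<open>q - p > 0\<close>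
      by (simp add: pos_divide_le_eq)
    then have "(w - m)*(z - p) \<le> (m - v)*(q - z)" by (simp add: algebra_simps)
    moreover have "q - z > 0" "z - p > 0" using qw(2) pv(2) by auto
    ultimately have "(w - m)/(q - z) \<le> (m - v)/(z - p)"
      by (simp add: divide_simps mult.commute)
    then show "a \<le> b" using qw(3) pv(3) by simp
  qed
  have "finite {(q,w)\<in>Q. q > z}" "finite {(p,v)\<in>Q. p < z}"
    by (rule finite_subset[OF _ fin], blast)+
  then have fA: "finite A" and fB: "finite B" unfolding A_def B_def by auto
  obtain \<sigma> where s: "\<forall>a\<in>A. a \<le> \<sigma>" "\<forall>b\<in>B. \<sigma> \<le> b" using sep[OF fA fB AB] by blast
  have "v \<le> m + \<sigma>*(p - z)" if "(p,v)\<in>Q" for p v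
  proof -
    consider "p > z" | "p < z" | "p = z" by linarith
    then show ?thesis
    proof cases
      case 1
      then have "(v - m)/(p - z) \<in> A" unfolding A_def using that by (intro image_eqI[where x="(p,v)"]) auto
      then have "(v - m)/(p - z) \<le> \<sigma>" using s by blast
      then show ?thesis using 1 by (simp add: divide_simps mult.commute)
    next
      case 2
      then have "(m - v)/(z - p) \<in> B" unfolding B_def using that by (intro image_eqI[where x="(p,v)"]) auto
      then have "\<sigma> \<le> (m - v)/(z - p)" using s by blast
      then show ?thesis using 2 by (simp add: divide_simps algebra_simps)
    next
      case 3
      have "\<forall>l. 0 \<le> l \<and> l \<le> 1 \<and> l*p + (1-l)*p = z \<longrightarrow> l*v + (1-l)*v \<le> m"
        using pair that by blast
      then have "1*v + (1-1)*v \<le> m" using 3 by (metis diff_self mult_1 mult_zero_left add_0_right order_refl zero_le_one)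
      then show ?thesis using 3 by simp
    qed
  qed
  then show ?thesis by auto
qed

lemma comb_le:
  fixes l v1 v2 m \<sigma> p1 p2 z :: real
  assumes "0 \<le> l" "l \<le> 1" "v1 \<le> m + \<sigma>*(p1 - z)" "v2 \<le> m + \<sigma>*(p2 - z)"
  shows "l*v1 + (1-l)*v2 \<le> m + \<sigma>*(l*p1 + (1-l)*p2 - z)"
proof -
  have "l*v1 \<le> l*(m + \<sigma>*(p1 - z))" using assms by (intro mult_left_mono) auto
  moreover have "(1-l)*v2 \<le> (1-l)*(m + \<sigma>*(p2 - z))" using assms by (intro mult_left_mono) auto
  moreover have "l*(m + \<sigma>*(p1 - z)) + (1-l)*(m + \<sigma>*(p2 - z)) = m + \<sigma>*(l*p1 + (1-l)*p2 - z)"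
    by (simp add: algebra_simps)
  ultimately show ?thesis by linarith
qed



lemma obj_le_h:
  assumes gfin: "\<forall>c\<in>ch s. \<forall>p. g c p \<noteq> \<infinity>"
    and h: "concave_ext h" "\<forall>i\<in>ch s. \<forall>x. g i x \<le> h x"
    and f: "feasible ch s \<mu> x"
  shows "obj2 g x \<le> h \<mu>"
proof -
  obtain a b t p q where x: "x = (a,b,t,p,q)" by (cases x) auto
  have fx: "a \<in> ch s" "b \<in> ch s" "0 \<le> t" "t \<le> 1" "t*p + (1-t)*q = \<mu>"
    using f x by (auto simp: feasible_def)
  show ?thesis
  proof (cases "obj2 g x = -\<infinity>")
    case True then show ?thesis by simp
  next
    case False
    moreover have "obj2 g x \<noteq> \<infinity>" using obj2_not_inf[OF gfin fx(1-4)] x by simp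
    ultimately obtain \<tau> where e: "obj2 g x = ereal \<tau>" by (cases "obj2 g x") auto
    obtain a' b' l p' q' v w where cl: "a'\<in>ch s" "b'\<in>ch s" "0\<le>l" "l\<le>1" "g a' p' = ereal v"
      "g b' q' = ereal w" "l*p' + (1-l)*q' = \<mu>" "l*v + (1-l)*w = \<tau>"
      using obj2_clean[OF gfin fx(1-4) e[unfolded x] fx(5)] by blast
    have "ereal v \<le> h p'" "ereal w \<le> h q'" using h(2) cl by (metis)+
    then have "ereal (l*v + (1-l)*w) \<le> h (l*p' + (1-l)*q')"
      using h(1) cl(3,4) unfolding concave_ext_def by blast
    then show ?thesis using cl e by simp
  qed
qed

lemma g_le_M:
  assumes selp: "\<forall>\<mu>. feasible ch s \<mu> (sel \<mu>) \<and> (\<forall>x. feasible ch s \<mu> x \<longrightarrow> obj2 g x \<le> obj2 g (sel \<mu>))"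
    and i: "i \<in> ch s"
  shows "g i x \<le> obj2 g (sel x)"
proof -
  have "feasible ch s x (i,i,1,x,x)" using i by (simp add: feasible_def)
  then have "obj2 g (i,i,1,x,x) \<le> obj2 g (sel x)" using selp by blast
  then show ?thesis by (simp add: obj2_def zero_ereal_def[symmetric])
qed

lemma M_concave:
  assumes gfin: "\<forall>c\<in>ch s. \<forall>p. g c p \<noteq> \<infinity>"
    and selp: "\<forall>\<mu>. feasible ch s \<mu> (sel \<mu>) \<and> (\<forall>x. feasible ch s \<mu> x \<longrightarrow> obj2 g x \<le> obj2 g (sel \<mu>))"
  shows "concave_ext (\<lambda>\<mu>. obj2 g (sel \<mu>))"
proof -
  define M where "M = (\<lambda>\<mu>. obj2 g (sel \<mu>))"
  have Mninf: "M x \<noteq> \<infinity>" for x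
  proof -
    obtain a b t p q where x: "sel x = (a,b,t,p,q)" by (cases "sel x") auto
    have "a \<in> ch s" "b \<in> ch s" "0 \<le> t" "t \<le> 1"
      using selp x by (auto simp: feasible_def dest: spec[of _ x])
    then show ?thesis using obj2_not_inf[OF gfin] x unfolding M_def by simp
  qed
  have clean: "\<exists>a' b' l p' q' v w. a'\<in>ch s \<and> b'\<in>ch s \<and> 0\<le>l \<and> l\<le>1 \<and> g a' p' = ereal v \<and> g b' q' = ereal w
     \<and> l*p' + (1-l)*q' = x \<and> l*v + (1-l)*w = A" if "M x = ereal A" for x A
  proof -
    obtain a b t p q where x: "sel x = (a,b,t,p,q)" by (cases "sel x") auto
    have fx: "a \<in> ch s" "b \<in> ch s" "0 \<le> t" "t \<le> 1" "t*p + (1-t)*q = x"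
      using selp x by (auto simp: feasible_def dest: spec[of _ x])
    show ?thesis using obj2_clean[OF gfin fx(1-4) _ fx(5)] that x unfolding M_def by simp
  qed
  have "ereal (t*a + (1-t)*b) \<le> M (t*x + (1-t)*y)"
    if t: "0 \<le> t" "t \<le> 1" and ha: "ereal a \<le> M x" and hb: "ereal b \<le> M y" for x y a b t
  proof (rule ccontr)
    assume neg: "\<not> ereal (t*a + (1-t)*b) \<le> M (t*x + (1-t)*y)"
    define z where "z = t*x + (1-t)*y"
    define T where "T = t*a + (1-t)*b"
    obtain A where MA: "M x = ereal A" using ha Mninf[of x] by (cases "M x") auto
    obtain B where MB: "M y = ereal B" using hb Mninf[of y] by (cases "M y") auto
    have aA: "a \<le> A" "b \<le> B" using ha hb MA MB by auto
    obtain a1 b1 l1 P1 P2 V1 V2 where c1: "a1\<in>ch s" "b1\<in>ch s" "0\<le>l1" "l1\<le>1" "g a1 P1 = ereal V1"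
      "g b1 P2 = ereal V2" "l1*P1 + (1-l1)*P2 = x" "l1*V1 + (1-l1)*V2 = A"
      using clean[OF MA] by blast
    obtain a2 b2 l2 P3 P4 V3 V4 where c2: "a2\<in>ch s" "b2\<in>ch s" "0\<le>l2" "l2\<le>1" "g a2 P3 = ereal V3"
      "g b2 P4 = ereal V4" "l2*P3 + (1-l2)*P4 = y" "l2*V3 + (1-l2)*V4 = B"
      using clean[OF MB] by blast
    define m where "m = (if M z = -\<infinity> then T - 1 else real_of_ereal (M z))"
    have mT: "m < T"
    proof (cases "M z = -\<infinity>")
      case True then show ?thesis by (simp add: m_def)
    next
      case False
      then have "M z = ereal m" using Mninf[of z] by (cases "M z") (auto simp: m_def)
      then show ?thesis using neg unfolding z_def T_def by simp
    qed
    have hM: "v \<le> m" if "ereal v \<le> M z" for v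
    proof (cases "M z = -\<infinity>")
      case True then show ?thesis using that by simp
    next
      case False
      then have "M z = ereal m" using Mninf[of z] by (cases "M z") (auto simp: m_def)
      then show ?thesis using that by simp
    qed
    define Q where "Q = {(P1,V1),(P2,V2),(P3,V3),(P4,V4)}"
    have atoms: "\<forall>(p,v)\<in>Q. \<exists>c\<in>ch s. g c p = ereal v" unfolding Q_def using c1 c2 by blast
    have pair0: "l*v + (1-l)*w \<le> m"
      if pv: "(p,v)\<in>Q" and qw: "(q,w)\<in>Q" and l: "0 \<le> l" "l \<le> 1" "l*p + (1-l)*q = z" for p v q w l
    proof -
      obtain c where c: "c\<in>ch s" "g c p = ereal v" using atoms pv by blast
      obtain c' where c': "c'\<in>ch s" "g c' q = ereal w" using atoms qw by blast
      have "feasible ch s z (c,c',l,p,q)" using c c' l by (simp add: feasible_def)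
      then have "obj2 g (c,c',l,p,q) \<le> M z" using selp unfolding M_def by blast
      then have "ereal (l*v + (1-l)*w) \<le> M z" using obj2_val[OF c(2) c'(2)] by simp
      then show "l*v + (1-l)*w \<le> m" by (rule hM)
    qed
    have pair: "\<forall>(p,v)\<in>Q. \<forall>(q,w)\<in>Q. \<forall>l. 0 \<le> l \<and> l \<le> 1 \<and> l*p + (1-l)*q = z \<longrightarrow> l*v + (1-l)*w \<le> m"
      using pair0 by blast
    obtain \<sigma> where sg: "\<forall>(p,v)\<in>Q. v \<le> m + \<sigma>*(p - z)"
      using support[OF _ pair] unfolding Q_def by auto
    have "A \<le> m + \<sigma>*(x - z)"
      using comb_le[OF c1(3,4), of V1 m \<sigma> P1 z V2 P2] sg c1(7,8) unfolding Q_def by auto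
    moreover have "B \<le> m + \<sigma>*(y - z)"
      using comb_le[OF c2(3,4), of V3 m \<sigma> P3 z V4 P4] sg c2(7,8) unfolding Q_def by auto
    ultimately have "t*A + (1-t)*B \<le> m + \<sigma>*(t*x + (1-t)*y - z)"
      using comb_le[OF t] by blast
    then have "t*A + (1-t)*B \<le> m" unfolding z_def by simp
    moreover have "T \<le> t*A + (1-t)*B" unfolding T_def using aA t
      by (intro add_mono mult_left_mono) auto
    ultimately show False using mT by linarith
  qed
  then show ?thesis unfolding concave_ext_def M_def[symmetric] using Mninf by blast
qed

lemma uce_eq:
  assumes gfin: "\<forall>c\<in>ch s. \<forall>p. g c p \<noteq> \<infinity>"
    and selp: "\<forall>\<mu>. feasible ch s \<mu> (sel \<mu>) \<and> (\<forall>x. feasible ch s \<mu> x \<longrightarrow> obj2 g x \<le> obj2 g (sel \<mu>))"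
  shows "uce (ch s) g \<mu> = obj2 g (sel \<mu>)"
proof (rule antisym)
  have "(\<lambda>\<mu>. obj2 g (sel \<mu>)) \<in> {h. concave_ext h \<and> (\<forall>i\<in>ch s. \<forall>x. g i x \<le> h x)}"
    using M_concave[OF gfin selp] g_le_M[OF selp] by blast
  then show "uce (ch s) g \<mu> \<le> obj2 g (sel \<mu>)" unfolding uce_def by (rule INF_lower2) simp
next
  show "obj2 g (sel \<mu>) \<le> uce (ch s) g \<mu>" unfolding uce_def
    using obj_le_h[where ch=ch and s=s, OF gfin] selp by (intro INF_greatest) blast
qed



lemma relpow_in_S:
  assumes gt: "game_tree S rt ch" and "a \<in> S" and "(a,b) \<in> (edges S ch)^^n"
  shows "b \<in> S"
  using assms(3)
proof (induction n arbitrary: b)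
  case 0 then show ?case using assms(2) by simp
next
  case (Suc n)
  then obtain c where "(a,c) \<in> (edges S ch)^^n" "(c,b) \<in> edges S ch" by (auto elim: relpow_Suc_E)
  then show ?case using gt unfolding edges_def game_tree_def by auto
qed

lemma dist_unique:
  assumes gt: "game_tree S rt ch"
  shows "(rt,s) \<in> (edges S ch)^^k \<Longrightarrow> (rt,s) \<in> (edges S ch)^^j \<Longrightarrow> k = j"
proof (induction k arbitrary: s j)
  case 0
  then have s: "s = rt" by simp
  show ?case
  proof (cases j)
    case (Suc j')
    then obtain p where "(p,s) \<in> edges S ch" using 0 by (auto elim: relpow_Suc_E)
    then show ?thesis using s gt unfolding edges_def game_tree_def by auto
  qed simp
next
  case (Suc k)
  then obtain p where p: "(rt,p) \<in> (edges S ch)^^k" "(p,s) \<in> edges S ch" by (auto elim: relpow_Suc_E)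
  have pS: "p \<in> S" "s \<in> ch p" using p(2) unfolding edges_def by auto
  have srt: "s \<noteq> rt" using pS gt unfolding game_tree_def by auto
  have sS: "s \<in> S" using pS gt unfolding game_tree_def by auto
  show ?case
  proof (cases j)
    case 0 then show ?thesis using Suc.prems srt by simp
  next
    case (Suc j')
    then obtain p' where p': "(rt,p') \<in> (edges S ch)^^j'" "(p',s) \<in> edges S ch"
      using Suc.prems by (auto elim: relpow_Suc_E)
    have p'S: "p' \<in> S" "s \<in> ch p'" using p'(2) unfolding edges_def by auto
    have "\<exists>!q. q \<in> S \<and> s \<in> ch q" using gt sS srt unfolding game_tree_def by auto
    then have "p = p'" using pS p'S by blast
    then show ?thesis using Suc.IH[OF p(1)] p'(1) Suc by simp
  qed
qed

lemma no_long_path: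
  assumes gt: "game_tree S rt ch"
  shows "(rt,l) \<notin> (edges S ch)^^(Suc (depth S rt ch))"
proof
  assume lp: "(rt,l) \<in> (edges S ch)^^(Suc (depth S rt ch))"
  define N where "N = {k. \<exists>l\<in>S. (rt,l) \<in> (edges S ch)^^k}"
  have fS: "finite S" and rtS: "rt \<in> S" using gt unfolding game_tree_def by auto
  have "N \<subseteq> (\<lambda>l. SOME k. (rt,l) \<in> (edges S ch)^^k) ` S"
  proof
    fix k assume "k \<in> N"
    then obtain l where l: "l \<in> S" "(rt,l) \<in> (edges S ch)^^k" unfolding N_def by auto
    from l(2) have "(rt,l) \<in> (edges S ch)^^(SOME k. (rt,l) \<in> (edges S ch)^^k)" by (rule someI)
    then have "k = (SOME k. (rt,l) \<in> (edges S ch)^^k)" using dist_unique[OF gt l(2)] by blast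
    then show "k \<in> (\<lambda>l. SOME k. (rt,l) \<in> (edges S ch)^^k) ` S" using l by blast
  qed
  then have fN: "finite N" using fS by (meson finite_imageI finite_subset)
  have "0 \<in> N" using rtS unfolding N_def by auto
  define K where "K = Max N"
  have "K \<in> N" using fN \<open>0 \<in> N\<close> unfolding K_def by (intro Max_in) auto
  then obtain l0 where l0: "l0 \<in> S" "(rt,l0) \<in> (edges S ch)^^K" unfolding N_def by auto
  have leaf: "l0 \<in> leaves S ch"
  proof (rule ccontr)
    assume "l0 \<notin> leaves S ch"
    then obtain c where c: "c \<in> ch l0" using l0 unfolding leaves_def by auto
    then have "(l0,c) \<in> edges S ch" using l0 unfolding edges_def by auto
    then have "(rt,c) \<in> (edges S ch)^^(Suc K)" using l0 by auto
    moreover have "c \<in> S" using c l0 gt unfolding game_tree_def by auto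
    ultimately have "Suc K \<in> N" unfolding N_def by auto
    then have "Suc K \<le> K" using fN unfolding K_def by simp
    then show False by simp
  qed
  define Dset where "Dset = {n. \<exists>l\<in>leaves S ch. (rt, l) \<in> (edges S ch) ^^ n}"
  have "Dset \<subseteq> N" unfolding Dset_def N_def leaves_def by auto
  then have "finite Dset" using fN by (rule finite_subset)
  moreover have "K \<in> Dset" using leaf l0 unfolding Dset_def by auto
  ultimately have "K \<le> depth S rt ch" unfolding depth_def Dset_def[symmetric] by simp
  moreover have "Suc (depth S rt ch) \<in> N" using lp relpow_in_S[OF gt rtS lp] unfolding N_def by auto
  then have "Suc (depth S rt ch) \<le> K" using fN unfolding K_def by simp
  ultimately show False by simp
qed

lemma U_ninf:
  assumes le: "learned_epfs S ch r1 r2 Vg Va U" and s: "s \<in> S"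
  shows "U s \<mu> \<noteq> \<infinity>"
proof (cases "s \<in> leaves S ch")
  case True then show ?thesis using le unfolding learned_epfs_def by auto
next
  case False
  then obtain f where "\<forall>\<mu>. U s \<mu> = (if \<mu> \<in> {Vg s..Va s} then ereal (f \<mu>) else -\<infinity>)"
    using le s unfolding learned_epfs_def by blast
  then show ?thesis by simp
qed

lemma Linf_le:
  assumes L: "Linf f g \<le> ereal \<epsilon>" and fu: "f \<mu> = ereal u" and gi: "g \<mu> \<noteq> \<infinity>"
  shows "\<exists>\<tau>. g \<mu> = ereal \<tau> \<and> \<bar>u - \<tau>\<bar> \<le> \<epsilon>"
proof -
  have t: "(if f \<mu> = g \<mu> then 0 else \<bar>f \<mu> - g \<mu>\<bar>) \<le> ereal \<epsilon>"
    using L unfolding Linf_def by (meson SUP_upper UNIV_I order_trans)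
  show ?thesis
  proof (cases "f \<mu> = g \<mu>")
    case True then show ?thesis using fu t by (metis abs_eq_0 diff_self zero_ereal_def ereal_less_eq(3) le_less)
  next
    case False
    then have t2: "\<bar>ereal u - g \<mu>\<bar> \<le> ereal \<epsilon>" using t fu by simp
    show ?thesis
    proof (cases "g \<mu>")
      case (real r) then show ?thesis using t2 by auto
    next
      case PInf then show ?thesis using gi by simp
    next
      case MInf then show ?thesis using t2 by simp
    qed
  qed
qed

lemma Linf_nonneg: "0 \<le> Linf f g"
proof -
  have "0 \<le> (if f 0 = g 0 then 0 else \<bar>f 0 - g 0\<bar>)" by simp
  also have "\<dots> \<le> Linf f g" unfolding Linf_def by (rule SUP_upper) simp
  finally show ?thesis .
qed

lemma mix_bound:
  fixes t X Y e :: real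
  assumes "0 \<le> t" "t \<le> 1" "t > 0 \<longrightarrow> \<bar>X\<bar> \<le> e" "t < 1 \<longrightarrow> \<bar>Y\<bar> \<le> e"
  shows "\<bar>t*X + (1-t)*Y\<bar> \<le> e"
proof -
  consider "t = 0" | "t = 1" | "0 < t \<and> t < 1" using assms by linarith
  then show ?thesis
  proof cases
    case 3
    have "\<bar>t*X + (1-t)*Y\<bar> \<le> \<bar>t*X\<bar> + \<bar>(1-t)*Y\<bar>" by (rule abs_triangle_ineq)
    also have "\<dots> = t*\<bar>X\<bar> + (1-t)*\<bar>Y\<bar>" using 3 by (simp add: abs_mult)
    also have "\<dots> \<le> t*e + (1-t)*e" using 3 assms by (intro add_mono mult_left_mono) auto
    also have "\<dots> = e" by (simp add: algebra_simps)
    finally show ?thesis .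
  qed (use assms in auto)
qed



lemma main:
  assumes gt: "game_tree S rt ch"
    and le: "learned_epfs S ch r1 r2 Vg Va U"
    and Lin: "\<forall>s\<in>S. Linf (U s) (target S ch S1 Vg U s) \<le> ereal \<epsilon>"
    and isel: "induced_selection S ch (beta ch (S - leaves S ch - S1) Vg) U sel"
    and lp: "leader_payoff S ch r1 sel W"
    and eps: "0 \<le> \<epsilon>"
  shows "\<forall>s\<in>S. (\<forall>l. (s,l) \<notin> (edges S ch)^^n) \<longrightarrow>
           (\<forall>\<mu> u. U s \<mu> = ereal u \<longrightarrow> \<bar>W s \<mu> - u\<bar> \<le> \<epsilon> * (real n - 1))"
proof (induction n)
  case 0
  then show ?case by auto
next
  case (Suc m)
  show ?case
  proof (intro ballI impI allI)
    fix s \<mu> u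
    assume sS: "s \<in> S" and np: "\<forall>l. (s,l) \<notin> (edges S ch)^^(Suc m)" and Us: "U s \<mu> = ereal u"
    show "\<bar>W s \<mu> - u\<bar> \<le> \<epsilon> * (real (Suc m) - 1)"
    proof (cases "s \<in> leaves S ch")
      case True
      have "\<forall>\<mu>. U s \<mu> = (if \<mu> = r2 s then ereal (r1 s) else -\<infinity>)"
        using le True unfolding learned_epfs_def by blast
      then have "U s \<mu> = (if \<mu> = r2 s then ereal (r1 s) else -\<infinity>)" by (rule spec)
      then have "\<mu> = r2 s" "u = r1 s" using Us by (auto split: if_splits)
      moreover have "W s \<mu> = r1 s" using lp True unfolding leader_payoff_def by auto
      ultimately show ?thesis using eps by simp
    next
      case False
      define bt where "bt = beta ch (S - leaves S ch - S1) Vg"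
      define g where "g = (\<lambda>c. thr (U c) (bt s c))"
      have chS: "ch s \<subseteq> S" using gt sS unfolding game_tree_def by auto
      have gfin: "\<forall>c\<in>ch s. \<forall>p. g c p \<noteq> \<infinity>"
        using U_ninf[OF le] chS unfolding g_def thr_def by auto
      have sNL: "s \<in> S - leaves S ch" using sS False by simp
      have "\<forall>\<mu>. feasible ch s \<mu> (sel s \<mu>) \<and> (\<forall>x. feasible ch s \<mu> x \<longrightarrow> objective bt U s x \<le> objective bt U s (sel s \<mu>))"
        using isel unfolding induced_selection_def bt_def using sNL by (rule bspec)
      then have selp: "\<forall>\<mu>. feasible ch s \<mu> (sel s \<mu>) \<and> (\<forall>x. feasible ch s \<mu> x \<longrightarrow> obj2 g x \<le> obj2 g (sel s \<mu>))"
        unfolding objective_eq g_def .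
      have tg: "target S ch S1 Vg U s \<mu> = obj2 g (sel s \<mu>)"
        using uce_eq[OF gfin selp] False unfolding target_def g_def bt_def by simp
      have Ls: "Linf (U s) (target S ch S1 Vg U s) \<le> ereal \<epsilon>" using Lin sS by blast
      have tni: "target S ch S1 Vg U s \<mu> \<noteq> \<infinity>"
      proof -
        obtain a b t p q where x: "sel s \<mu> = (a,b,t,p,q)" by (cases "sel s \<mu>") auto
        have "a \<in> ch s" "b \<in> ch s" "0 \<le> t" "t \<le> 1"
          using selp x by (auto simp: feasible_def dest: spec[of _ \<mu>])
        then show ?thesis using obj2_not_inf[OF gfin] x tg by simp
      qed
      then obtain \<tau> where tau: "target S ch S1 Vg U s \<mu> = ereal \<tau>" "\<bar>u - \<tau>\<bar> \<le> \<epsilon>"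
        using Linf_le[OF Ls Us tni] by blast
      obtain c1 c2 t p1 p2 where x: "sel s \<mu> = (c1,c2,t,p1,p2)" by (cases "sel s \<mu>") auto
      have fx: "c1 \<in> ch s" "c2 \<in> ch s" "0 \<le> t" "t \<le> 1"
        using selp x by (auto simp: feasible_def dest: spec[of _ \<mu>])
      obtain v w where vw: "t > 0 \<longrightarrow> g c1 p1 = ereal v" "t < 1 \<longrightarrow> g c2 p2 = ereal w"
        "\<tau> = t*v + (1-t)*w"
      proof -
        have "obj2 g (c1,c2,t,p1,p2) = ereal \<tau>" using tau(1) tg x by simp
        then show ?thesis using obj2_real[OF gfin fx] that by blast
      qed
      obtain c0 where c0: "c0 \<in> ch s" using False sS unfolding leaves_def by auto
      have "(s,c0) \<in> (edges S ch)^^1" using c0 sS unfolding edges_def by auto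
      then have m1: "m \<ge> 1" using np by (cases m) auto
      have chnp: "\<forall>l. (c,l) \<notin> (edges S ch)^^m" if "c \<in> ch s" for c
      proof (intro allI notI)
        fix l assume "(c,l) \<in> (edges S ch)^^m"
        moreover have "(s,c) \<in> edges S ch" using that sS unfolding edges_def by auto
        ultimately have "(s,l) \<in> (edges S ch)^^(Suc m)" by (meson relpow_Suc_I2)
        then show False using np by blast
      qed
      have Ug: "U c p = ereal r" if "g c p = ereal r" for c p r
        using that unfolding g_def thr_def by (auto split: if_splits)
      have IHc: "\<bar>W c p - r\<bar> \<le> \<epsilon> * (real m - 1)" if "c \<in> ch s" "U c p = ereal r" for c p r
      proof -
        have cS: "c \<in> S" using chS that(1) by auto
        have "(\<forall>l. (c,l) \<notin> (edges S ch)^^m) \<longrightarrow>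
           (\<forall>\<mu> u. U c \<mu> = ereal u \<longrightarrow> \<bar>W c \<mu> - u\<bar> \<le> \<epsilon> * (real m - 1))"
          using Suc.IH cS by (rule bspec)
        then show ?thesis using chnp[OF that(1)] that(2) by blast
      qed
      have b1: "t > 0 \<longrightarrow> \<bar>W c1 p1 - v\<bar> \<le> \<epsilon> * (real m - 1)"
        using IHc[OF fx(1) Ug] vw(1) by blast
      have b2: "t < 1 \<longrightarrow> \<bar>W c2 p2 - w\<bar> \<le> \<epsilon> * (real m - 1)"
        using IHc[OF fx(2) Ug] vw(2) by blast
      have "\<forall>\<mu>. (case sel s \<mu> of (s', s'', t, \<mu>', \<mu>'') \<Rightarrow>
        W s \<mu> = t * W s' \<mu>' + (1 - t) * W s'' \<mu>'')"
        using conjunct2[OF lp[unfolded leader_payoff_def]] sNL by (rule bspec)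
      then have "case sel s \<mu> of (s', s'', t, \<mu>', \<mu>'') \<Rightarrow>
        W s \<mu> = t * W s' \<mu>' + (1 - t) * W s'' \<mu>''" by (rule spec)
      then have Ws: "W s \<mu> = t * W c1 p1 + (1-t) * W c2 p2" unfolding x by simp
      have "W s \<mu> - \<tau> = t*(W c1 p1 - v) + (1-t)*(W c2 p2 - w)"
        using Ws vw(3) by (simp add: algebra_simps)
      then have "\<bar>W s \<mu> - \<tau>\<bar> \<le> \<epsilon> * (real m - 1)"
        using mix_bound[OF fx(3,4) b1 b2] by simp
      then have "\<bar>W s \<mu> - u\<bar> \<le> \<epsilon> * (real m - 1) + \<epsilon>" using tau(2) by linarith
      then show ?thesis by (simp add: algebra_simps)
    qed
  qed
qed

theorem theorem4:
  "\<exists>C::real. \<forall>S rt ch S1 r1 r2 \<pi>g \<pi>a Vg Va U sel W \<mu>root (\<epsilon>::real).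
     game_tree S rt ch \<and> S1 \<subseteq> S - leaves S ch \<and>
     behav ch S1 \<pi>g \<and> grim_value S ch S1 r2 \<pi>g Vg \<and>
     behav ch (S - leaves S ch) \<pi>a \<and> alt_value S ch r2 \<pi>a Va \<and>
     (\<forall>s\<in>S. Vg s \<le> Va s) \<and>
     learned_epfs S ch r1 r2 Vg Va U \<and>
     (\<forall>s\<in>S. Linf (U s) (target S ch S1 Vg U s) \<le> ereal \<epsilon>) \<and>
     induced_selection S ch (beta ch (S - leaves S ch - S1) Vg) U sel \<and>
     U rt \<mu>root = (SUP \<mu>. U rt \<mu>) \<and>
     leader_payoff S ch r1 sel W
     \<longrightarrow> \<bar>ereal (W rt \<mu>root) - (SUP \<mu>. U rt \<mu>)\<bar>
           \<le> ereal (C * real (depth S rt ch) * \<epsilon>)"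
proof (rule exI[of _ 1], intro allI impI, elim conjE)
  fix S rt ch S1 r1 r2 \<pi>g \<pi>a Vg Va U sel W \<mu>root and \<epsilon> :: real
  assume gt: "game_tree S rt ch" and VV: "\<forall>s\<in>S. Vg s \<le> Va s"
    and le: "learned_epfs S ch r1 r2 Vg Va U"
    and Lin: "\<forall>s\<in>S. Linf (U s) (target S ch S1 Vg U s) \<le> ereal \<epsilon>"
    and isel: "induced_selection S ch (beta ch (S - leaves S ch - S1) Vg) U sel"
    and mr: "U rt \<mu>root = (SUP \<mu>. U rt \<mu>)"
    and lp: "leader_payoff S ch r1 sel W"
  have rtS: "rt \<in> S" using gt unfolding game_tree_def by auto
  have eps: "0 \<le> \<epsilon>"
    using Linf_nonneg[of "U rt" "target S ch S1 Vg U rt"] Lin rtS by (metis ereal_less_eq(5) order_trans)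
  have "\<exists>x. U rt x \<noteq> -\<infinity>"
  proof (cases "rt \<in> leaves S ch")
    case True then show ?thesis using le unfolding learned_epfs_def by (rule_tac x="r2 rt" in exI) auto
  next
    case False
    then obtain f where "\<forall>\<mu>. U rt \<mu> = (if \<mu> \<in> {Vg rt..Va rt} then ereal (f \<mu>) else -\<infinity>)"
      using le rtS unfolding learned_epfs_def by blast
    then show ?thesis using VV rtS by (rule_tac x="Vg rt" in exI) auto
  qed
  then obtain x where x: "U rt x \<noteq> -\<infinity>" by blast
  have "U rt x \<le> U rt \<mu>root" unfolding mr by (rule SUP_upper) simp
  then have "U rt \<mu>root \<noteq> -\<infinity>" using x by auto
  then obtain u where u: "U rt \<mu>root = ereal u" using U_ninf[OF le rtS] by (cases "U rt \<mu>root") auto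
  have "\<bar>W rt \<mu>root - u\<bar> \<le> \<epsilon> * (real (Suc (depth S rt ch)) - 1)"
  proof -
    have nl: "\<forall>l. (rt,l) \<notin> (edges S ch)^^(Suc (depth S rt ch))" using no_long_path[OF gt] by blast
    have "(\<forall>l. (rt,l) \<notin> (edges S ch)^^(Suc (depth S rt ch))) \<longrightarrow>
           (\<forall>\<mu> u. U rt \<mu> = ereal u \<longrightarrow> \<bar>W rt \<mu> - u\<bar> \<le> \<epsilon> * (real (Suc (depth S rt ch)) - 1))"
      using main[OF gt le Lin isel lp eps, of "Suc (depth S rt ch)"] rtS by (rule bspec)
    then show ?thesis using nl u by blast
  qed
  then show "\<bar>ereal (W rt \<mu>root) - (SUP \<mu>. U rt \<mu>)\<bar> \<le> ereal (1 * real (depth S rt ch) * \<epsilon>)"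
    using u mr by (simp add: mult.commute)
qed

end
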